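(* Let $A\in\mathbb{R}^{m\times n}$ with $\operatorname{rk}(A)=m$, $b\in\mathbb{R}^m$, $P=\{x\in\mathbb{R}^n: Ax=b,\ x\ge\mathbb{0}\}$. Let $B\subseteq[n]$ be a feasible basis, $N=[n]\setminus B$, $x^*=(A_B^{-1}b,\mathbb{0}_N)\in P$, and let $x^{(0)}$ be a vertex of $P$. Consider the following procedure: for $t=0,1,\dots$, while $x^{(t)}\ne x^*$, take a conformal circuit decomposition $x^*-x^{(t)}=\sum_{j=1}^k h^{(j)}$ with $k\le n-m$, choose $g^{(t)}=h^{(j)}$ for some $j$ maximizing $\|h^{(j)}_N\|_1$, and set $x^{(t+1)}=\operatorname{aug}_P(x^{(t)},g^{(t)})$. Then for every iteration $t\ge 0$ of this procedure, $\|x^{(t+1)}_N\|_1\le\big(1-\frac{1}{n-m}\big)\|x^{(t)}_N\|_1$, and $|x^{(t+1)}_i-x^{(t)}_i|\le(n-m)|x^*_i-x^{(t)}_i|$ for all $i\in[n]$.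
   Context: An elementary vector of $\ker(A)$ is a nonzero $g\in\ker(A)$ with inclusion-minimal support among nonzero vectors of $\ker(A)$. Vectors $x,y$ are sign-compatible if $x_iy_i\ge0$ for all $i$; $x\sqsubseteq y$ means they are sign-compatible and $|x_i|\le|y_i|$ for all $i$. A conformal circuit decomposition of $x\in\ker(A)$ is an expression $x=\sum_{j=1}^k h^{(j)}$ with each $h^{(j)}$ an elementary vector of $\ker(A)$ and $h^{(j)}\sqsubseteq x$ (one with $k\le\dim\ker(A)=n-m$ always exists). For $x\in P$ and elementary $g$, $\operatorname{aug}_P(x,g)=x+\alpha g$ with $\alpha=\max\{\bar\alpha: x+\bar\alpha g\in P\}$. *)

theory Defs
  imports "HOL-Analysis.Analysis"
begin

definition std_poly :: "real^'n^'m \<Rightarrow> real^'m \<Rightarrow> (real^'n) set" where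
  "std_poly A b = {x. A *v x = b \<and> (\<forall>i. 0 \<le> x $ i)}"

definition supp_vec :: "real^'n \<Rightarrow> 'n set" where
  "supp_vec x = {i. x $ i \<noteq> 0}"

definition elementary :: "real^'n^'m \<Rightarrow> real^'n \<Rightarrow> bool" where
  "elementary A g \<longleftrightarrow> g \<noteq> 0 \<and> A *v g = 0 \<and>
     (\<forall>h. h \<noteq> 0 \<and> A *v h = 0 \<and> supp_vec h \<subseteq> supp_vec g \<longrightarrow> supp_vec h = supp_vec g)"

definition sign_compatible :: "real^'n \<Rightarrow> real^'n \<Rightarrow> bool" where
  "sign_compatible x y \<longleftrightarrow> (\<forall>i. x $ i * y $ i \<ge> 0)"

definition conf_le :: "real^'n \<Rightarrow> real^'n \<Rightarrow> bool" where
  "conf_le x y \<longleftrightarrow> sign_compatible x y \<and> (\<forall>i. \<bar>x $ i\<bar> \<le> \<bar>y $ i\<bar>)"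

definition conf_circ_decomp :: "real^'n^'m \<Rightarrow> real^'n \<Rightarrow> (real^'n) list \<Rightarrow> bool" where
  "conf_circ_decomp A x hs \<longleftrightarrow> sum_list hs = x \<and>
     (\<forall>h\<in>set hs. elementary A h \<and> conf_le h x) \<and>
     length hs \<le> CARD('n) - CARD('m)"

definition aug :: "(real^'n) set \<Rightarrow> real^'n \<Rightarrow> real^'n \<Rightarrow> real^'n" where
  "aug P x g = x + (GREATEST a. x + a *\<^sub>R g \<in> P) *\<^sub>R g"

definition norm1_on :: "'n set \<Rightarrow> real^'n \<Rightarrow> real" where
  "norm1_on S x = (\<Sum>i\<in>S. \<bar>x $ i\<bar>)"

definition is_basis :: "real^'n^'m \<Rightarrow> 'n set \<Rightarrow> bool" where
  "is_basis A B \<longleftrightarrow> card B = CARD('m) \<and> inj_on (\<lambda>j. column j A) B \<and>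
     \<not> dependent ((\<lambda>j. column j A) ` B)"

text \<open>Basic solution x = (A_B^{-1} b, 0_N): the unique x with Ax=b and x_N = 0.\<close>
definition basic_sol :: "real^'n^'m \<Rightarrow> real^'m \<Rightarrow> 'n set \<Rightarrow> real^'n" where
  "basic_sol A b B = (THE x. A *v x = b \<and> (\<forall>j. j \<notin> B \<longrightarrow> x $ j = 0))"

definition feasible_basis :: "real^'n^'m \<Rightarrow> real^'m \<Rightarrow> 'n set \<Rightarrow> bool" where
  "feasible_basis A b B \<longleftrightarrow> is_basis A B \<and> (\<forall>i. 0 \<le> basic_sol A b B $ i)"

end

theory Submission
  imports Defs
begin

lemma smult_eq_scaleR: "(c::real) *s (v::real^'m) = c *\<^sub>R v" by (simp add: vec_eq_iff)

lemma mult_as_sum_B: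
  fixes A :: "real^'n^'m"
  assumes "\<forall>j. j \<notin> B \<longrightarrow> v $ j = 0" "inj_on (\<lambda>j. column j A) B"
  shows "A *v v = (\<Sum>u\<in>(\<lambda>j. column j A) ` B. v $ (inv_into B (\<lambda>j. column j A) u) *\<^sub>R u)"
proof -
  have "A *v v = (\<Sum>j\<in>UNIV. v $ j *\<^sub>R column j A)"
    by (simp add: matrix_mult_sum smult_eq_scaleR)
  also have "\<dots> = (\<Sum>j\<in>B. v $ j *\<^sub>R column j A)"
    by (rule sum.mono_neutral_right) (use assms in auto)
  also have "\<dots> = (\<Sum>u\<in>(\<lambda>j. column j A) ` B. v $ (inv_into B (\<lambda>j. column j A) u) *\<^sub>R u)"
    by (subst sum.reindex[OF assms(2)]) (simp add: inv_into_f_f[OF assms(2)])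
  finally show ?thesis .
qed

lemma ker_B:
  fixes A :: "real^'n^'m"
  assumes "is_basis A B" "A *v v = 0" "\<forall>j. j \<notin> B \<longrightarrow> v $ j = 0"
  shows "v = 0"
proof -
  let ?c = "\<lambda>j. column j A"
  have inj: "inj_on ?c B" and ind: "independent (?c ` B)" using assms(1) by (auto simp: is_basis_def)
  have s0: "(\<Sum>u\<in>?c ` B. v $ (inv_into B ?c u) *\<^sub>R u) = 0"
    using mult_as_sum_B[OF assms(3) inj] assms(2) by simp
  have all: "\<forall>c. (\<Sum>w\<in>?c ` B. c w *\<^sub>R w) = 0 \<longrightarrow> (\<forall>w\<in>?c ` B. c w = 0)"
    using ind unfolding independent_explicit by blast
  have "\<forall>u\<in>?c ` B. v $ (inv_into B ?c u) = 0"
    using all[THEN spec[where x="\<lambda>u. v $ (inv_into B ?c u)"]] s0 by blast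
  then have "\<forall>j\<in>B. v $ j = 0" using inv_into_f_f[OF inj] by force
  then show ?thesis using assms(3) by (auto simp: vec_eq_iff)
qed

lemma basic_sol_props:
  fixes A :: "real^'n^'m"
  assumes "is_basis A B"
  shows "A *v basic_sol A b B = b \<and> (\<forall>j. j \<notin> B \<longrightarrow> basic_sol A b B $ j = 0)"
proof -
  let ?c = "\<lambda>j. column j A"
  have inj: "inj_on ?c B" and ind: "independent (?c ` B)" and cd: "card B = CARD('m)"
    using assms(1) by (auto simp: is_basis_def)
  have card: "card (?c ` B) = CARD('m)" using card_image[OF inj] cd by simp
  have "UNIV \<subseteq> span (?c ` B)"
    using card_ge_dim_independent[of "?c ` B" UNIV] ind card by (simp add: dim_UNIV)
  then have "b \<in> span (?c ` B)" by blast
  moreover have fin: "finite (?c ` B)" using ind independent_explicit by blast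
  ultimately obtain u where u: "b = (\<Sum>w\<in>?c ` B. u w *\<^sub>R w)"
    using span_finite by blast
  define y :: "real^'n" where "y = (\<chi> j. if j \<in> B then u (?c j) else 0)"
  have yN: "\<forall>j. j \<notin> B \<longrightarrow> y $ j = 0" by (simp add: y_def)
  have "A *v y = (\<Sum>w\<in>?c ` B. y $ (inv_into B ?c w) *\<^sub>R w)"
    by (rule mult_as_sum_B[OF yN inj])
  also have "\<dots> = (\<Sum>w\<in>?c ` B. u w *\<^sub>R w)"
  proof (rule sum.cong[OF refl])
    fix w assume "w \<in> ?c ` B"
    then obtain j where j: "j \<in> B" "w = ?c j" by blast
    then show "y $ (inv_into B ?c w) *\<^sub>R w = u w *\<^sub>R w"
      using inv_into_f_f[OF inj j(1)] by (simp add: y_def)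
  qed
  finally have ey: "A *v y = b" using u by simp
  have uniq: "z = y" if "A *v z = b \<and> (\<forall>j. j \<notin> B \<longrightarrow> z $ j = 0)" for z
  proof -
    have "A *v (z - y) = 0" using that ey by (simp add: matrix_vector_mult_diff_distrib)
    moreover have "\<forall>j. j \<notin> B \<longrightarrow> (z - y) $ j = 0" using that yN by simp
    ultimately have "z - y = 0" using ker_B[OF assms] by blast
    then show ?thesis by simp
  qed
  have "\<exists>!z. A *v z = b \<and> (\<forall>j. j \<notin> B \<longrightarrow> z $ j = 0)"
    using ey yN uniq by blast
  from theI'[OF this] show ?thesis unfolding basic_sol_def .
qed

lemma mem_line:
  fixes A :: "real^'n^'m"
  assumes "A *v x = b" "A *v g = 0"
  shows "x + a *\<^sub>R g \<in> std_poly A b \<longleftrightarrow> (\<forall>i. 0 \<le> x $ i + a * g $ i)"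
  using assms by (simp add: std_poly_def matrix_vector_right_distrib matrix_vector_mult_scaleR)

lemma aug_lemma:
  fixes A :: "real^'n^'m"
  assumes x: "x \<in> std_poly A b" and g0: "A *v g = 0" and neg: "g $ i0 < 0"
    and one: "x + g \<in> std_poly A b"
  defines "\<alpha> \<equiv> (GREATEST a. x + a *\<^sub>R g \<in> std_poly A b)"
  shows "aug (std_poly A b) x g = x + \<alpha> *\<^sub>R g \<and> x + \<alpha> *\<^sub>R g \<in> std_poly A b \<and> 1 \<le> \<alpha>"
proof -
  have Ax: "A *v x = b" and xpos: "\<forall>i. 0 \<le> x $ i" using x by (auto simp: std_poly_def)
  note ml = mem_line[OF Ax g0]
  define I where "I = {i. g $ i < 0}"
  have finI: "finite I" by simp
  have neI: "I \<noteq> {}" using neg I_def by blast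
  define m where "m = Min ((\<lambda>i. x $ i / (- g $ i)) ` I)"
  have "m \<in> (\<lambda>i. x $ i / (- g $ i)) ` I"
    unfolding m_def using finI neI by (intro Min_in) auto
  then obtain k where k: "k \<in> I" "m = x $ k / (- g $ k)" by blast
  have mle: "m \<le> x $ i / (- g $ i)" if "i \<in> I" for i
    unfolding m_def using that finI by (intro Min_le) auto
  have m0: "0 \<le> m" using k xpos I_def by (simp add: divide_nonneg_neg)
  have Pm: "x + m *\<^sub>R g \<in> std_poly A b"
    unfolding ml
  proof
    fix i
    show "0 \<le> x $ i + m * g $ i"
    proof (cases "g $ i < 0")
      case True
      then have "m \<le> x $ i / (- g $ i)" using mle I_def by simp
      then have "m * (- g $ i) \<le> x $ i / (- g $ i) * (- g $ i)"
        using True by (intro mult_right_mono) auto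
      also have "\<dots> = x $ i" using True by simp
      finally have "m * (- g $ i) \<le> x $ i" .
      then show ?thesis by simp
    next
      case False
      then show ?thesis using m0 xpos by (simp add: add_nonneg_nonneg)
    qed
  qed
  have ub: "a \<le> m" if "x + a *\<^sub>R g \<in> std_poly A b" for a
  proof -
    have "0 \<le> x $ k + a * g $ k" using that ml by blast
    then have "a * (- g $ k) \<le> x $ k" by simp
    have gk: "0 < - g $ k" using k I_def by simp
    have "a = a * (- g $ k) / (- g $ k)" using gk by simp
    also have "\<dots> \<le> x $ k / (- g $ k)"
      using \<open>a * (- g $ k) \<le> x $ k\<close> gk by (intro divide_right_mono) auto
    finally show ?thesis using k by simp
  qed
  have am: "\<alpha> = m" unfolding \<alpha>_def by (rule Greatest_equality[where P="\<lambda>a. x + a *\<^sub>R g \<in> std_poly A b", OF Pm ub])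
  have "1 \<le> m" using ub[of 1] one by simp
  then show ?thesis using am Pm by (simp add: aug_def \<alpha>_def)
qed

lemma step_lemma:
  fixes A :: "real^'n^'m"
  assumes fb: "feasible_basis A b B" and x: "x \<in> std_poly A b"
    and dec: "conf_circ_decomp A (basic_sol A b B - x) hs" and j: "j < length hs"
    and mx: "\<forall>j'<length hs. norm1_on (- B) (hs ! j') \<le> norm1_on (- B) (hs ! j)"
  defines "y \<equiv> aug (std_poly A b) x (hs ! j)"
  shows "y \<in> std_poly A b \<and>
    norm1_on (- B) y \<le> (1 - 1 / real (CARD('n) - CARD('m))) * norm1_on (- B) x \<and>
    (\<forall>i. \<bar>y $ i - x $ i\<bar> \<le> real (CARD('n) - CARD('m)) * \<bar>basic_sol A b B $ i - x $ i\<bar>)"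
proof -
  define xs where "xs = basic_sol A b B"
  define d where "d = xs - x"
  define g where "g = hs ! j"
  define L where "L = length hs"
  define K where "K = CARD('n) - CARD('m)"
  define N where "N = - B"
  have isb: "is_basis A B" using fb by (simp add: feasible_basis_def)
  have xsN: "\<forall>i. i \<notin> B \<longrightarrow> xs $ i = 0" using basic_sol_props[OF isb] xs_def by blast
  have xspos: "\<forall>i. 0 \<le> xs $ i" using fb xs_def by (simp add: feasible_basis_def)
  have Ax: "A *v x = b" and xpos: "\<forall>i. 0 \<le> x $ i" using x by (auto simp: std_poly_def)
  have hsum: "sum_list hs = d" and hel: "\<forall>h\<in>set hs. elementary A h \<and> conf_le h d"
    and LK: "L \<le> K"
    using dec by (auto simp: conf_circ_decomp_def d_def xs_def L_def K_def)
  have gin: "g \<in> set hs" using j g_def by simp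
  have hN: "h $ i \<le> 0" if "h \<in> set hs" "i \<in> N" for h i
  proof -
    have c: "h $ i * d $ i \<ge> 0" "\<bar>h $ i\<bar> \<le> \<bar>d $ i\<bar>"
      using hel that(1) by (auto simp: conf_le_def sign_compatible_def)
    have di: "d $ i = - x $ i" using xsN that(2) by (simp add: d_def N_def)
    show ?thesis
    proof (cases "x $ i = 0")
      case True then show ?thesis using c di by simp
    next
      case False
      then have "x $ i > 0" using xpos by (simp add: order_less_le)
      then show ?thesis using c(1) di by (simp add: mult_le_0_iff zero_le_mult_iff)
    qed
  qed
  have gconf: "g $ i * d $ i \<ge> 0" "\<bar>g $ i\<bar> \<le> \<bar>d $ i\<bar>" for i
    using hel gin by (auto simp: conf_le_def sign_compatible_def)
  have gnn: "0 \<le> x $ i + 1 * g $ i" for i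
  proof (cases "g $ i \<ge> 0")
    case True then show ?thesis using xpos by simp
  next
    case False
    then have "d $ i \<le> 0" using gconf(1)[of i] by (simp add: zero_le_mult_iff)
    then have "g $ i \<ge> d $ i" using gconf(2)[of i] False by linarith
    then show ?thesis using xspos[rule_format, of i] by (simp add: d_def)
  qed
  have Ag: "A *v g = 0" and gnz: "g \<noteq> 0" using hel gin by (auto simp: elementary_def)
  have one: "x + g \<in> std_poly A b" using mem_line[OF Ax Ag, of 1] gnn by simp
  obtain i0 where i0: "i0 \<in> N" "g $ i0 \<noteq> 0"
  proof -
    have "\<not> (\<forall>i. i \<notin> B \<longrightarrow> g $ i = 0)" using ker_B[OF isb Ag] gnz by blast
    then show ?thesis using that N_def by auto
  qed
  have gi0: "g $ i0 < 0" using hN[OF gin i0(1)] i0(2) by simp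
  define \<alpha> where "\<alpha> = (GREATEST a. x + a *\<^sub>R g \<in> std_poly A b)"
  have au: "y = x + \<alpha> *\<^sub>R g" "x + \<alpha> *\<^sub>R g \<in> std_poly A b" "1 \<le> \<alpha>"
    using aug_lemma[OF x Ag gi0 one] unfolding y_def g_def \<alpha>_def by auto
  have ypos: "\<forall>i. 0 \<le> y $ i" using au(1,2) by (simp add: std_poly_def)
  define X where "X = norm1_on N x"
  define G where "G = norm1_on N g"
  have finN: "finite N" by simp
  have n1h: "norm1_on N h = (\<Sum>i\<in>N. - h $ i)" if "h \<in> set hs" for h
    unfolding norm1_on_def using hN[OF that] by (intro sum.cong) auto
  have GX: "X = (\<Sum>i\<in>N. x $ i)" unfolding X_def norm1_on_def using xpos by simp
  have Gg: "G = (\<Sum>i\<in>N. - g $ i)" using n1h[OF gin] G_def by simp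
  have "(\<Sum>k<L. norm1_on N (hs ! k)) = (\<Sum>k<L. \<Sum>i\<in>N. - (hs ! k) $ i)"
    by (intro sum.cong refl n1h) (simp add: L_def)
  also have "\<dots> = (\<Sum>i\<in>N. - (\<Sum>k<L. (hs ! k) $ i))"
    by (subst sum.swap) (simp add: sum_negf)
  also have "\<dots> = (\<Sum>i\<in>N. - d $ i)"
  proof (intro sum.cong refl)
    fix i
    have "d $ i = (\<Sum>k\<in>{0..<L}. hs ! k) $ i" using hsum sum_list_sum_nth[of hs] L_def by simp
    also have "\<dots> = (\<Sum>k<L. (hs ! k) $ i)" by (simp add: sum_component atLeast0LessThan)
    finally show "- (\<Sum>k<L. (hs ! k) $ i) = - d $ i" by simp
  qed
  also have "\<dots> = X" unfolding GX using xsN by (intro sum.cong) (auto simp: d_def N_def)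
  finally have Xs: "X = (\<Sum>k<L. norm1_on N (hs ! k))" by simp
  have "X \<le> (\<Sum>k<L. G)" unfolding Xs G_def g_def using mx N_def L_def
    by (intro sum_mono) auto
  then have XLG: "X \<le> real L * G" by simp
  have Gpos: "0 < G"
  proof -
    have "\<bar>g $ i0\<bar> \<le> norm1_on N g" unfolding norm1_on_def
      using i0(1) by (intro member_le_sum) auto
    then show ?thesis using i0(2) G_def by simp
  qed
  have Xnn: "0 \<le> X" using GX xpos by (simp add: sum_nonneg)
  have Y: "norm1_on N y = X - \<alpha> * G"
  proof -
    have "norm1_on N y = (\<Sum>i\<in>N. x $ i + \<alpha> * g $ i)"
      unfolding norm1_on_def using ypos au(1) by simp
    also have "\<dots> = X - \<alpha> * G"
      by (simp add: GX Gg sum.distrib sum_distrib_left sum_negf)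
    finally show ?thesis .
  qed
  have Ynn: "0 \<le> norm1_on N y" unfolding norm1_on_def by (simp add: sum_nonneg)
  have L1: "1 \<le> L" using j L_def by simp
  have K1: "1 \<le> real K" using L1 LK by simp
  have aG: "\<alpha> * G \<le> X" using Y Ynn by simp
  have aL: "\<alpha> \<le> real L"
  proof -
    have "\<alpha> * G \<le> real L * G" using aG XLG by simp
    then show ?thesis using Gpos by simp
  qed
  have aK: "\<alpha> \<le> real K" using aL LK by simp
  have GXK: "X / real K \<le> G"
  proof -
    have "X / real K \<le> X / real L" using L1 LK Xnn by (intro divide_left_mono) auto
    also have "\<dots> \<le> G" using XLG L1 by (simp add: divide_le_eq mult.commute)
    finally show ?thesis .
  qed
  have c1: "norm1_on N y \<le> (1 - 1 / real K) * X"
  proof -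
    have "norm1_on N y \<le> X - G" using Y au(3) Gpos by (simp add: mult_right_mono)
    also have "\<dots> \<le> X - X / real K" using GXK by simp
    also have "\<dots> = (1 - 1 / real K) * X" by (simp add: algebra_simps)
    finally show ?thesis .
  qed
  have c2: "\<bar>y $ i - x $ i\<bar> \<le> real K * \<bar>xs $ i - x $ i\<bar>" for i
  proof -
    have "\<bar>y $ i - x $ i\<bar> = \<alpha> * \<bar>g $ i\<bar>" using au(1,3) by (simp add: abs_mult)
    also have "\<dots> \<le> real K * \<bar>d $ i\<bar>" using aK gconf(2)[of i] au(3)
      by (intro mult_mono) auto
    finally show ?thesis by (simp add: d_def)
  qed
  show ?thesis using au(2) c1 c2 unfolding y_def g_def X_def N_def K_def xs_def
    using au(1) y_def g_def by simp
qed

theorem lemma3p1: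
  fixes A :: "real^'n^'m" and b :: "real^'m" and B :: "'n set"
    and x :: "nat \<Rightarrow> real^'n"
  assumes rank: "rank A = CARD('m)"
    and fb: "feasible_basis A b B"
    and vert: "x 0 extreme_point_of std_poly A b"
    and step: "\<And>t. (\<forall>s\<le>t. x s \<noteq> basic_sol A b B) \<Longrightarrow>
        (\<exists>hs j. conf_circ_decomp A (basic_sol A b B - x t) hs \<and> j < length hs \<and>
           (\<forall>j'<length hs. norm1_on (- B) (hs ! j') \<le> norm1_on (- B) (hs ! j)) \<and>
           x (Suc t) = aug (std_poly A b) (x t) (hs ! j))"
    and t_iter: "\<forall>s\<le>t. x s \<noteq> basic_sol A b B"
  shows "norm1_on (- B) (x (Suc t))
           \<le> (1 - 1 / real (CARD('n) - CARD('m))) * norm1_on (- B) (x t)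
         \<and> (\<forall>i. \<bar>x (Suc t) $ i - x t $ i\<bar>
               \<le> real (CARD('n) - CARD('m)) * \<bar>basic_sol A b B $ i - x t $ i\<bar>)"
proof -
  have mem: "s \<le> t \<Longrightarrow> x s \<in> std_poly A b" for s
  proof (induction s)
    case 0
    then show ?case using vert by (simp add: extreme_point_of_def)
  next
    case (Suc s)
    then have "s \<le> t" by simp
    then have ne: "\<forall>s'\<le>s. x s' \<noteq> basic_sol A b B" using t_iter by auto
    from step[OF ne] obtain hs j where
      h: "conf_circ_decomp A (basic_sol A b B - x s) hs" "j < length hs"
         "\<forall>j'<length hs. norm1_on (- B) (hs ! j') \<le> norm1_on (- B) (hs ! j)"
         "x (Suc s) = aug (std_poly A b) (x s) (hs ! j)" by blast
    show ?case using step_lemma[OF fb Suc.IH[OF \<open>s \<le> t\<close>] h(1-3)] h(4) by simp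
  qed
  from step[OF t_iter] obtain hs j where
    h: "conf_circ_decomp A (basic_sol A b B - x t) hs" "j < length hs"
       "\<forall>j'<length hs. norm1_on (- B) (hs ! j') \<le> norm1_on (- B) (hs ! j)"
       "x (Suc t) = aug (std_poly A b) (x t) (hs ! j)" by blast
  show ?thesis using step_lemma[OF fb mem[OF order_refl] h(1-3)] h(4) by simp
qed

end
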